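(* For real $x$ define $$D(x)=\int_0^{\infty}\left(\frac{e^{tx}+t x\,e^{tx}}{\left(1+e^{tx}\right)^2}-2x\,e^{-t x^2}\right)dt+\int_0^{\infty}\left(2t x^3 e^{-t x^2}-\frac{2t x\,e^{2tx}}{\left(1+e^{tx}\right)^3}\right)dt .$$ Then for every $x\neq 0$ both improper integrals converge and $D(x)=0$, while for $x=0$ the first integral diverges to $+\infty$ and the second equals $0$, so $D(0)=+\infty$. That is, $D$ takes the values of the Dirac delta function: $0$ for $x\ne0$ and $+\infty$ at $x=0$. *)

theory Defs
  imports "HOL-Analysis.Analysis"
begin

definition D1_integrand :: "real \<Rightarrow> real \<Rightarrow> real" where
  "D1_integrand x t =
     (exp (t * x) + t * x * exp (t * x)) / (1 + exp (t * x))^2 - 2 * x * exp (- t * x^2)"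

definition D2_integrand :: "real \<Rightarrow> real \<Rightarrow> real" where
  "D2_integrand x t =
     2 * t * x^3 * exp (- t * x^2) - 2 * t * x * exp (2 * t * x) / (1 + exp (t * x))^3"

definition improper_converges_to :: "(real \<Rightarrow> real) \<Rightarrow> real \<Rightarrow> bool" where
  "improper_converges_to f L \<longleftrightarrow>
     (\<forall>T\<ge>0. f integrable_on {0..T}) \<and> ((\<lambda>T. integral {0..T} f) \<longlongrightarrow> L) at_top"

definition improper_diverges_to_infinity :: "(real \<Rightarrow> real) \<Rightarrow> bool" where
  "improper_diverges_to_infinity f \<longleftrightarrow>
     (\<forall>T\<ge>0. f integrable_on {0..T}) \<and> filterlim (\<lambda>T. integral {0..T} f) at_top at_top"

end

theory Submission
  imports Defs "HOL-Real_Asymp.Real_Asymp"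
begin

definition F1 :: "real \<Rightarrow> real \<Rightarrow> real" where
 "F1 x t = t * exp (t*x) / (1 + exp (t*x)) - (1/x) * ln (1 + exp (t*x)) - (1/x) * inverse (1+exp(t*x)) + (2/x) * exp (-t*x^2)"
definition G :: "real \<Rightarrow> real \<Rightarrow> real" where
 "G x t = t * exp (t*x) / (1 + exp (t*x))^2 - 2*x*t*exp (-t*x^2)"

lemma F1_deriv: assumes "x \<noteq> 0" shows "(F1 x has_real_derivative D1_integrand x t) (at t)"
proof -
  have pos: "1 + exp(t*x) \<noteq> 0" "0 < 1 + exp(t*x)" by (smt (verit) exp_gt_zero)+
  define v where "v = 1 + exp(t*x)"
  have upos: "v > 0" "v \<noteq> 0" and ue: "exp (t*x) = v - 1" unfolding v_def by (smt (verit) exp_gt_zero)+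
  show ?thesis unfolding F1_def
    apply (rule DERIV_cong)
     apply (rule derivative_eq_intros refl | (use pos assms in simp; fail))+
    using pos assms unfolding D1_integrand_def
    apply (simp only: ue)
    using upos apply (simp add: field_simps)
    apply algebra
    done
qed

lemma G_deriv: assumes "x \<noteq> 0" shows "(G x has_real_derivative D1_integrand x t + D2_integrand x t) (at t)"
proof -
  have pos: "1 + exp(t*x) \<noteq> 0" "0 < 1 + exp(t*x)" by (smt (verit) exp_gt_zero)+
  have e2: "exp (2*t*x) = exp(t*x)^2" by (simp add: power2_eq_square flip: exp_add)
  define v where "v = 1 + exp(t*x)"
  have upos: "v > 0" "v \<noteq> 0" and ue: "exp (t*x) = v - 1" unfolding v_def by (smt (verit) exp_gt_zero)+
  show ?thesis unfolding G_def
    apply (rule DERIV_cong)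
     apply (rule derivative_eq_intros refl | (use pos assms in simp; fail))+
    using pos assms unfolding D1_integrand_def D2_integrand_def e2
    apply (simp only: ue)
    using upos apply (simp add: field_simps)
    apply algebra
    done
qed

lemma h_top: "((\<lambda>s::real. s*exp s/(1+exp s)^2) \<longlongrightarrow> 0) at_top" by real_asymp
lemma h_bot: "((\<lambda>s::real. s*exp s/(1+exp s)^2) \<longlongrightarrow> 0) at_bot" by real_asymp
lemma k_top: "((\<lambda>s::real. s*exp s/(1+exp s) - ln (1 + exp s) - inverse (1 + exp s)) \<longlongrightarrow> 0) at_top" by real_asymp
lemma k_bot: "((\<lambda>s::real. s*exp s/(1+exp s) - ln (1 + exp s) - inverse (1 + exp s)) \<longlongrightarrow> -1) at_bot" by real_asymp
lemma e1: "(c::real) > 0 \<Longrightarrow> ((\<lambda>t. t*exp(-t*c)) \<longlongrightarrow> 0) at_top" by real_asymp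
lemma e2: "(c::real) > 0 \<Longrightarrow> ((\<lambda>t. exp(-t*c)) \<longlongrightarrow> 0) at_top" by real_asymp
lemma m1: "(c::real) > 0 \<Longrightarrow> filterlim (\<lambda>t. t*c) at_top at_top" by real_asymp
lemma m2: "(c::real) < 0 \<Longrightarrow> filterlim (\<lambda>t. t*c) at_bot at_top" by real_asymp

definition kk :: "real \<Rightarrow> real" where
  "kk s = s*exp s/(1+exp s) - ln (1 + exp s) - inverse (1 + exp s)"
definition hh :: "real \<Rightarrow> real" where
  "hh s = s*exp s/(1+exp s)^2"

lemma F1_eq: assumes "x \<noteq> 0" shows "F1 x = (\<lambda>t. (1/x) * kk (t*x) + (2/x) * exp(-t*(x^2)))"
proof (rule ext)
  fix t
  have "(1/x) * kk (t*x) = t * exp (t*x) / (1 + exp (t*x)) - (1/x) * ln (1 + exp (t*x)) - (1/x) * inverse (1+exp(t*x))"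
    unfolding kk_def using assms by (simp add: algebra_simps)
  then show "F1 x t = (1/x) * kk (t*x) + (2/x) * exp(-t*(x^2))" unfolding F1_def by simp
qed

lemma G_eq: assumes "x \<noteq> 0" shows "G x = (\<lambda>t. (1/x) * hh (t*x) - 2*x*(t*exp(-t*(x^2))))"
proof (rule ext)
  fix t
  have "(1/x) * hh (t*x) = t * exp (t*x) / (1 + exp (t*x))^2"
    unfolding hh_def using assms by simp
  then show "G x t = (1/x) * hh (t*x) - 2*x*(t*exp(-t*(x^2)))" unfolding G_def by (simp add: algebra_simps)
qed

lemma F1_lim: assumes "x \<noteq> 0" shows "\<exists>L. (F1 x \<longlongrightarrow> L) at_top"
proof -
  have x2: "x^2 > 0" using assms by simp
  have E: "((\<lambda>t. exp(-t*(x^2))) \<longlongrightarrow> 0) at_top" using e2[OF x2] .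
  obtain K where K: "((\<lambda>t. kk (t*x)) \<longlongrightarrow> K) at_top"
  proof (cases "x > 0")
    case True
    show ?thesis using filterlim_compose[OF k_top[folded kk_def] m1[OF True]] that by blast
  next
    case False
    then have "x < 0" using assms by simp
    show ?thesis using filterlim_compose[OF k_bot[folded kk_def] m2[OF \<open>x < 0\<close>]] that by blast
  qed
  have "((\<lambda>t. (1/x) * kk (t*x) + (2/x) * exp(-t*(x^2))) \<longlongrightarrow> (1/x) * K + (2/x) * 0) at_top"
    using K E by (intro tendsto_intros)
  then show ?thesis unfolding F1_eq[OF assms] by blast
qed

lemma G_lim: assumes "x \<noteq> 0" shows "(G x \<longlongrightarrow> 0) at_top"
proof -
  have x2: "x^2 > 0" using assms by simp
  have E: "((\<lambda>t. t*exp(-t*(x^2))) \<longlongrightarrow> 0) at_top" using e1[OF x2] .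
  have H: "((\<lambda>t. hh (t*x)) \<longlongrightarrow> 0) at_top"
  proof (cases "x > 0")
    case True
    show ?thesis using filterlim_compose[OF h_top[folded hh_def] m1[OF True]] by simp
  next
    case False
    then have "x < 0" using assms by simp
    show ?thesis using filterlim_compose[OF h_bot[folded hh_def] m2[OF \<open>x < 0\<close>]] by simp
  qed
  have "((\<lambda>t. (1/x) * hh (t*x) - 2*x*(t*exp(-t*(x^2)))) \<longlongrightarrow> (1/x) * 0 - 2*x*0) at_top"
    using H E by (intro tendsto_intros)
  then show ?thesis unfolding G_eq[OF assms] by simp
qed

lemma D2_deriv: assumes "x \<noteq> 0" shows "((\<lambda>t. G x t - F1 x t) has_real_derivative D2_integrand x t) (at t)"
  using DERIV_diff[OF G_deriv[OF assms] F1_deriv[OF assms]] by simp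

lemma ftc: assumes "\<And>t. (F has_real_derivative f t) (at t)" "T \<ge> 0"
  shows "(f has_integral F T - F 0) {0..T}"
  apply (rule fundamental_theorem_of_calculus[OF assms(2)])
  using assms(1) by (simp add: has_real_derivative_iff_has_vector_derivative[symmetric] has_field_derivative_at_within)

lemma improper: assumes "\<And>t. (F has_real_derivative f t) (at t)" "(F \<longlongrightarrow> L) at_top"
  shows "improper_converges_to f (L - F 0)"
  unfolding improper_converges_to_def
proof safe
  fix T :: real assume "T \<ge> 0" then show "f integrable_on {0..T}" using ftc[OF assms(1)] by blast
next
  have ev: "\<forall>\<^sub>F T in at_top. F T - F 0 = integral {0..T} f"
  proof (rule eventually_mono[OF eventually_ge_at_top[of "0::real"]])
    fix T :: real assume "T \<ge> 0"
    show "F T - F 0 = integral {0..T} f" using integral_unique[OF ftc[OF assms(1) \<open>T \<ge> 0\<close>]] by simp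
  qed
  have tl: "((\<lambda>T. F T - F 0) \<longlongrightarrow> L - F 0) at_top" using assms(2) by (intro tendsto_intros)
  show "((\<lambda>T. integral {0..T} f) \<longlongrightarrow> L - F 0) at_top" by (rule Lim_transform_eventually[OF tl ev])
qed

theorem mainTheorem7:
  shows "(\<forall>x::real. x \<noteq> 0 \<longrightarrow>
            (\<exists>I1 I2. improper_converges_to (D1_integrand x) I1 \<and>
                      improper_converges_to (D2_integrand x) I2 \<and> I1 + I2 = 0))
       \<and> improper_diverges_to_infinity (D1_integrand 0)
       \<and> improper_converges_to (D2_integrand 0) 0"
proof (intro conjI allI impI)
  fix x :: real assume x: "x \<noteq> 0"
  obtain L where L: "(F1 x \<longlongrightarrow> L) at_top" using F1_lim[OF x] by blast
  have c1: "improper_converges_to (D1_integrand x) (L - F1 x 0)"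
    using improper[OF F1_deriv[OF x] L] .
  have "((\<lambda>t. G x t - F1 x t) \<longlongrightarrow> 0 - L) at_top" using G_lim[OF x] L by (intro tendsto_intros)
  then have c2: "improper_converges_to (D2_integrand x) ((0 - L) - (G x 0 - F1 x 0))"
    using improper[OF D2_deriv[OF x]] by blast
  have "G x 0 = 0" unfolding G_def by simp
  then show "\<exists>I1 I2. improper_converges_to (D1_integrand x) I1 \<and>
                      improper_converges_to (D2_integrand x) I2 \<and> I1 + I2 = 0"
  proof (intro exI conjI)
    show "improper_converges_to (D1_integrand x) (L - F1 x 0)" by (rule c1)
    show "improper_converges_to (D2_integrand x) ((0 - L) - (G x 0 - F1 x 0))" by (rule c2)
    show "L - F1 x 0 + ((0 - L) - (G x 0 - F1 x 0)) = 0" using \<open>G x 0 = 0\<close> by simp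
  qed
next
  have d1: "D1_integrand 0 = (\<lambda>t. 1/4)" by (rule ext) (simp add: D1_integrand_def)
  have i: "integral {0..T} (\<lambda>t::real. 1/4::real) = T/4" if "T \<ge> 0" for T :: real
    using that by simp
  have lim4: "filterlim (\<lambda>T::real. T/4) at_top at_top" by real_asymp
  have ev: "\<forall>\<^sub>F T in at_top. T/4 = integral {0..T} (\<lambda>t::real. 1/4::real)"
  proof (rule eventually_mono[OF eventually_ge_at_top[of "0::real"]])
    fix T :: real assume "T \<ge> 0"
    then show "T/4 = integral {0..T} (\<lambda>t::real. 1/4::real)" using i by simp
  qed
  have "filterlim (\<lambda>T. integral {0..T} (\<lambda>t::real. 1/4::real)) at_top at_top"
    using filterlim_cong[OF refl refl ev, THEN iffD1, OF lim4] by simp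
  then show "improper_diverges_to_infinity (D1_integrand 0)"
    unfolding improper_diverges_to_infinity_def d1 by auto
next
  have d2: "D2_integrand 0 = (\<lambda>t. 0)" by (rule ext) (simp add: D2_integrand_def)
  show "improper_converges_to (D2_integrand 0) 0"
    unfolding improper_converges_to_def d2 by (simp add: integrable_0)
qed

end
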